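(* For integers $f \geq 1$, $\ell \geq 1$ and $q \geq 1$, let $N_q(f,\ell)$ be the number of numerical semigroups with Frobenius number $f$, multiplicity $\ell+1$, and depth $q$; for $j \geq 1$ let $S(j)$ be the number of numerical semigroups with multiplicity $j+1$ and Frobenius number $3j+2$. Then: (i) $N_2(f,\ell) = 2^{f-2-\ell}$ when $(f-1)/2 \leq \ell \leq f-2$; (ii) $N_3(f,\ell) = 2^{\ell - j} \cdot S(j)$ when $(f-2)/3 \leq \ell \leq (f-3)/2$, where $j = f - 2 - 2\ell$. For all other $\ell$, $N_2(f,\ell) = 0$ and $N_3(f,\ell) = 0$, respectively.
   Context: A numerical semigroup is a subset $\Lambda \subseteq \mathbb{N}_0$ containing $0$, closed under addition, with finite complement. Its multiplicity is $m(\Lambda) = \min(\Lambda \setminus \{0\})$, its conductor $c(\Lambda)$ is the least $c \in \mathbb{N}_0$ with $c + \mathbb{N}_0 \subseteq \Lambda$, its Frobenius number is $c(\Lambda)-1$, and its depth is $\lceil c(\Lambda)/m(\Lambda) \rceil$. *)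

theory Defs
  imports Complex_Main
begin

definition numerical_semigroup :: "nat set \<Rightarrow> bool" where
  "numerical_semigroup S \<longleftrightarrow> 0 \<in> S \<and> (\<forall>a\<in>S. \<forall>b\<in>S. a + b \<in> S) \<and> finite (UNIV - S)"

definition multiplicity :: "nat set \<Rightarrow> nat" where
  "multiplicity S = (LEAST x. x \<in> S \<and> x \<noteq> 0)"

definition conductor :: "nat set \<Rightarrow> nat" where
  "conductor S = (LEAST c. \<forall>n\<ge>c. n \<in> S)"

text \<open>Frobenius number = conductor - 1 (as an integer, so that it is -1 for S = N).\<close>
definition frobenius :: "nat set \<Rightarrow> int" where
  "frobenius S = int (conductor S) - 1"

definition depth :: "nat set \<Rightarrow> nat" where
  "depth S = nat \<lceil>real (conductor S) / real (multiplicity S)\<rceil>"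

definition N_count :: "nat \<Rightarrow> nat \<Rightarrow> nat \<Rightarrow> nat" where
  "N_count q f l = card {S. numerical_semigroup S \<and> frobenius S = int f
      \<and> multiplicity S = l + 1 \<and> depth S = q}"

definition S_count :: "nat \<Rightarrow> nat" where
  "S_count j = card {S. numerical_semigroup S \<and> multiplicity S = j + 1
      \<and> frobenius S = int (3 * j + 2)}"

end

theory Submission
  imports Defs
begin

definition sgp :: "nat \<Rightarrow> nat \<Rightarrow> nat set \<Rightarrow> bool" where
  "sgp f m S \<longleftrightarrow> 0 \<in> S \<and> (\<forall>a\<in>S. \<forall>b\<in>S. a + b \<in> S) \<and> m \<in> S
     \<and> (\<forall>x. 0 < x \<and> x < m \<longrightarrow> x \<notin> S) \<and> f \<notin> S \<and> (\<forall>n>f. n \<in> S)"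

lemma char:
  assumes "m \<ge> 1"
  shows "(numerical_semigroup S \<and> frobenius S = int f \<and> multiplicity S = m) \<longleftrightarrow> sgp f m S"
proof
  assume H: "numerical_semigroup S \<and> frobenius S = int f \<and> multiplicity S = m"
  hence ns: "0 \<in> S" "\<forall>a\<in>S. \<forall>b\<in>S. a + b \<in> S" "finite (UNIV - S)"
    by (auto simp: numerical_semigroup_def)
  have c: "conductor S = f + 1" using H by (simp add: frobenius_def)
  obtain N where N: "\<forall>x\<in>UNIV - S. x \<le> N" using ns(3) finite_nat_set_iff_bounded_le by blast
  have ex: "\<forall>n\<ge>Suc N. n \<in> S" using N by force
  have all: "\<forall>n\<ge>f+1. n \<in> S"
    using LeastI[of "\<lambda>c. \<forall>n\<ge>c. n \<in> S", OF ex] c unfolding conductor_def by simp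
  have "\<not> (\<forall>n\<ge>f. n \<in> S)"
    using not_less_Least[of f "\<lambda>c. \<forall>n\<ge>c. n \<in> S"] c unfolding conductor_def by simp
  hence fS: "f \<notin> S" using all by (metis Suc_eq_plus1 le_antisym not_less_eq_eq)
  have ex2: "Suc (Suc N) \<in> S \<and> Suc (Suc N) \<noteq> 0" using ex by auto
  have mS: "m \<in> S" "m \<noteq> 0"
    using LeastI[of "\<lambda>x. x \<in> S \<and> x \<noteq> 0", OF ex2] H unfolding multiplicity_def by auto
  have lt: "\<forall>x. 0 < x \<and> x < m \<longrightarrow> x \<notin> S"
    using not_less_Least[of _ "\<lambda>x. x \<in> S \<and> x \<noteq> 0"] H unfolding multiplicity_def by auto
  show "sgp f m S" unfolding sgp_def using ns mS lt fS all by auto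
next
  assume H: "sgp f m S"
  hence h: "0 \<in> S" "\<forall>a\<in>S. \<forall>b\<in>S. a + b \<in> S" "m \<in> S" "\<forall>x. 0 < x \<and> x < m \<longrightarrow> x \<notin> S"
    "f \<notin> S" "\<forall>n>f. n \<in> S" by (auto simp: sgp_def)
  have fin: "finite (UNIV - S)"
    by (rule finite_subset[of _ "{..f}"]) (use h(6) not_le in auto)
  have c: "conductor S = f + 1" unfolding conductor_def
  proof (rule Least_equality)
    show "\<forall>n\<ge>f + 1. n \<in> S" using h(6) by auto
    show "\<And>y. \<forall>n\<ge>y. n \<in> S \<Longrightarrow> f + 1 \<le> y" using h(5) by (metis Suc_eq_plus1 not_less_eq_eq)
  qed
  have mu: "multiplicity S = m" unfolding multiplicity_def
  proof (rule Least_equality)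
    show "m \<in> S \<and> m \<noteq> 0" using h(3) assms by auto
    show "\<And>y. y \<in> S \<and> y \<noteq> 0 \<Longrightarrow> m \<le> y" using h(4) by (meson bot_nat_0.not_eq_extremum not_le)
  qed
  show "numerical_semigroup S \<and> frobenius S = int f \<and> multiplicity S = m"
    using h fin c mu by (simp add: numerical_semigroup_def frobenius_def)
qed

lemma char_cond:
  assumes "sgp f m S" "m \<ge> 1"
  shows "conductor S = f + 1"
  using char[OF assms(2), of S f] assms by (simp add: frobenius_def)

lemma N_eq:
  "N_count q f l = card {S. sgp f (l+1) S \<and> nat \<lceil>real (f+1) / real (l+1)\<rceil> = q}"
proof -
  have "{S. numerical_semigroup S \<and> frobenius S = int f \<and> multiplicity S = l + 1 \<and> depth S = q}
     = {S. sgp f (l+1) S \<and> nat \<lceil>real (f+1) / real (l+1)\<rceil> = q}"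
  proof (intro Collect_cong)
    fix S
    show "(numerical_semigroup S \<and> frobenius S = int f \<and> multiplicity S = l + 1 \<and> depth S = q) =
         (sgp f (l + 1) S \<and> nat \<lceil>real (f + 1) / real (l + 1)\<rceil> = q)"
      using char[of "l+1" S f] char_cond[of f "l+1" S] unfolding depth_def
      by (metis le_add2)
  qed
  thus ?thesis unfolding N_count_def by simp
qed

lemma S_eq: "S_count j = card {S. sgp (3*j+2) (j+1) S}"
  unfolding S_count_def using char[of "j+1" _ "3*j+2"] by (metis (no_types, lifting) le_add2)

lemma ceil_eq:
  assumes "m \<ge> 1" "c \<ge> 1"
  shows "nat \<lceil>real c / real m\<rceil> = q \<longleftrightarrow> (q \<ge> 1 \<and> (q - 1) * m < c \<and> c \<le> q * m)"
proof -
  have mp: "real m > 0" using assms by simp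
  have "nat \<lceil>real c / real m\<rceil> = q \<longleftrightarrow> (q \<ge> 1 \<and> \<lceil>real c / real m\<rceil> = int q) \<or> (q = 0 \<and> \<lceil>real c / real m\<rceil> \<le> 0)"
    by (cases "q = 0") auto
  also have "\<dots> \<longleftrightarrow> (q \<ge> 1 \<and> real q - 1 < real c / real m \<and> real c / real m \<le> real q) \<or> (q = 0 \<and> real c / real m \<le> 0)"
    by (simp add: ceiling_eq_iff ceiling_le_zero)
  also have "\<dots> \<longleftrightarrow> (q \<ge> 1 \<and> (real q - 1) * real m < real c \<and> real c \<le> real q * real m) \<or> (q = 0 \<and> real c \<le> 0)"
    using mp by (simp add: pos_less_divide_eq pos_divide_le_eq divide_le_0_iff)
  also have "\<dots> \<longleftrightarrow> (q \<ge> 1 \<and> (q - 1) * m < c \<and> c \<le> q * m)"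
  proof (cases "q = 0")
    case True then show ?thesis using assms by auto
  next
    case False
    then have "real q - 1 = real (q - 1)" by simp
    then show ?thesis using False by (metis of_nat_less_iff of_nat_le_iff of_nat_mult)
  qed
  finally show ?thesis .
qed


lemma part1:
  assumes "1 \<le> m" "m < f" "f < 2*m"
  shows "card {S. sgp f m S} = 2 ^ (f - m - 1)"
proof -
  let ?g = "\<lambda>X. {0,m} \<union> X \<union> {f<..}"
  have eq: "{S. sgp f m S} = ?g ` Pow {m<..<f}"
  proof (intro equalityI subsetI)
    fix S assume "S \<in> {S. sgp f m S}"
    hence h: "0 \<in> S" "m \<in> S" "\<forall>x. 0 < x \<and> x < m \<longrightarrow> x \<notin> S"
      "f \<notin> S" "\<forall>n>f. n \<in> S" by (auto simp: sgp_def)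
    have "S = ?g (S \<inter> {m<..<f})"
    proof (intro set_eqI iffI)
      fix x assume "x \<in> S" thus "x \<in> ?g (S \<inter> {m<..<f})" using h
        by (cases "x = 0"; cases "x < m"; cases "x = m"; cases "x < f"; cases "x = f") auto
    next
      fix x assume "x \<in> ?g (S \<inter> {m<..<f})" thus "x \<in> S" using h by auto
    qed
    thus "S \<in> ?g ` Pow {m<..<f}" by blast
  next
    fix S assume "S \<in> ?g ` Pow {m<..<f}"
    then obtain X where X: "X \<subseteq> {m<..<f}" "S = ?g X" by blast
    have "sgp f m S" unfolding sgp_def
    proof (intro conjI ballI allI impI)
      fix a b assume ab: "a \<in> S" "b \<in> S"
      show "a + b \<in> S"
      proof (cases "a = 0 \<or> b = 0")
        case True thus ?thesis using ab by auto
      next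
        case False
        hence "a \<ge> m" "b \<ge> m" using ab X assms by auto
        thus ?thesis using X assms by auto
      qed
    qed (use X assms in auto)
    thus "S \<in> {S. sgp f m S}" by simp
  qed
  have inj: "inj_on ?g (Pow {m<..<f})"
  proof (rule inj_onI)
    fix X Y assume "X \<in> Pow {m<..<f}" "Y \<in> Pow {m<..<f}" "?g X = ?g Y"
    hence "?g X \<inter> {m<..<f} = ?g Y \<inter> {m<..<f}" by simp
    moreover have "?g X \<inter> {m<..<f} = X" "?g Y \<inter> {m<..<f} = Y"
      using \<open>X \<in> _\<close> \<open>Y \<in> _\<close> by auto
    ultimately show "X = Y" by simp
  qed
  show ?thesis unfolding eq card_image[OF inj] by (simp add: card_Pow)
qed


definition PP :: "nat \<Rightarrow> (nat set \<times> nat set) set" where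
  "PP j = {(A,B). A \<subseteq> {0<..<j} \<and> B \<subseteq> {0<..<j} \<and> A \<subseteq> B
      \<and> (\<forall>x\<in>A. \<forall>y\<in>A. x + y \<noteq> j \<and> (x + y < j \<longrightarrow> x + y \<in> B))}"

definition enc :: "nat \<Rightarrow> nat \<Rightarrow> (nat set \<times> nat set) \<times> nat set \<Rightarrow> nat set" where
  "enc f m p = (case p of ((A,B),C) \<Rightarrow> {x. x = 0 \<or> x = m \<or> (m < x \<and> x - m \<in> A) \<or> x = 2*m
     \<or> (2*m < x \<and> x - 2*m \<in> B) \<or> (m < x \<and> x - m \<in> C) \<or> f < x})"

definition dec :: "nat \<Rightarrow> nat \<Rightarrow> nat set \<Rightarrow> (nat set \<times> nat set) \<times> nat set" where
  "dec f m S = (({a. 0 < a \<and> a < f - 2*m \<and> m + a \<in> S}, {b. 0 < b \<and> b < f - 2*m \<and> 2*m + b \<in> S}),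
      {c. f - 2*m < c \<and> c < m \<and> m + c \<in> S})"

lemma dec_enc:
  assumes "1 \<le> m" "2*m < f" "f < 3*m" "((A,B),C) \<in> PP (f - 2*m) \<times> Pow {f-2*m<..<m}"
  shows "dec f m (enc f m ((A,B),C)) = ((A,B),C)"
proof -
  have h: "A \<subseteq> {0<..<f-2*m}" "B \<subseteq> {0<..<f-2*m}" "C \<subseteq> {f-2*m<..<m}"
    using assms(4) by (auto simp: PP_def)
  have 1: "{a. 0 < a \<and> a < f - 2*m \<and> m + a \<in> enc f m ((A,B),C)} = A"
    using h assms(1-3) by (auto simp: enc_def)
  have 2: "{b. 0 < b \<and> b < f - 2*m \<and> 2*m + b \<in> enc f m ((A,B),C)} = B"
    using h assms(1-3) by (auto simp: enc_def)
  have 3: "{c. f - 2*m < c \<and> c < m \<and> m + c \<in> enc f m ((A,B),C)} = C"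
    using h assms(1-3) by (auto simp: enc_def)
  show ?thesis unfolding dec_def 1 2 3 ..
qed


lemma enc_sgp:
  assumes "1 \<le> m" "2*m < f" "f < 3*m" "((A,B),C) \<in> PP (f - 2*m) \<times> Pow {f-2*m<..<m}"
  shows "sgp f m (enc f m ((A,B),C))"
proof -
  define j where "j = f - 2*m"
  have fj: "f = 2*m + j" "j < m" "0 < j" using assms(1-3) j_def by auto
  have h: "A \<subseteq> {0<..<j}" "B \<subseteq> {0<..<j}" "C \<subseteq> {j<..<m}" "A \<subseteq> B"
     "\<forall>x\<in>A. \<forall>y\<in>A. x + y \<noteq> j \<and> (x + y < j \<longrightarrow> x + y \<in> B)"
    using assms(4) by (auto simp: PP_def j_def)
  let ?S = "enc f m ((A,B),C)"
  have mem: "x \<in> ?S \<longleftrightarrow> x = 0 \<or> x = m \<or> (m < x \<and> x - m \<in> A) \<or> x = 2*m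
     \<or> (2*m < x \<and> x - 2*m \<in> B) \<or> (m < x \<and> x - m \<in> C) \<or> f < x" for x
    by (simp add: enc_def)
  have low: "x \<in> ?S \<Longrightarrow> x \<noteq> 0 \<Longrightarrow> x < 2*m \<Longrightarrow> \<exists>a. x = m + a \<and> (a = 0 \<or> a \<in> A \<or> a \<in> C)" for x
  proof -
    assume a: "x \<in> ?S" "x \<noteq> 0" "x < 2*m"
    hence "x \<ge> m" "x \<noteq> 2*m" "\<not> 2*m < x" "\<not> f < x" using fj unfolding mem by auto
    thus ?thesis using a(1) unfolding mem by (intro exI[of _ "x - m"]) auto
  qed
  have ge: "x \<in> ?S \<Longrightarrow> x \<noteq> 0 \<Longrightarrow> x \<ge> m" for x
    unfolding mem using fj by auto
  have closed: "a + b \<in> ?S" if ab: "a \<in> ?S" "b \<in> ?S" for a b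
  proof (cases "a = 0 \<or> b = 0")
    case True thus ?thesis using ab by auto
  next
    case False
    show ?thesis
    proof (cases "f < a + b")
      case True thus ?thesis by (simp add: mem)
    next
      case F: False
      have am: "a \<ge> m" "b \<ge> m" using ge ab False by auto
      have "a < 2*m" "b < 2*m" using am F fj by auto
      then obtain x y where x: "a = m + x" "x = 0 \<or> x \<in> A \<or> x \<in> C"
        and y: "b = m + y" "y = 0 \<or> y \<in> A \<or> y \<in> C"
        using low ab False by metis
      have xy: "x + y \<le> j" using F x y fj by auto
      have xn: "x \<notin> C" "y \<notin> C" using h(3) xy by auto
      have "a + b = 2*m + (x + y)" using x y by simp
      moreover have "x + y = 0 \<or> (x + y < j \<and> x + y \<in> B)"
      proof -
        { assume "x = 0" "y = 0" hence ?thesis by simp }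
        moreover { assume "x = 0" "y \<in> A" hence ?thesis using h by auto }
        moreover { assume "y = 0" "x \<in> A" hence ?thesis using h by auto }
        moreover { assume "x \<in> A" "y \<in> A" hence ?thesis using h(5) xy by force }
        ultimately show ?thesis using x(2) y(2) xn by blast
      qed
      ultimately show ?thesis unfolding mem by auto
    qed
  qed
  show ?thesis unfolding sgp_def
  proof (intro conjI ballI allI impI)
    fix a b assume "a \<in> ?S" "b \<in> ?S" thus "a + b \<in> ?S" by (rule closed)
  next
    fix x :: nat assume "0 < x \<and> x < m" thus "x \<notin> ?S" unfolding mem using fj by auto
  next
    show "f \<notin> ?S" unfolding mem using fj h by auto
  qed (auto simp: mem)
qed

lemma enc_dec:
  assumes "1 \<le> m" "2*m < f" "f < 3*m" "sgp f m S"
  shows "dec f m S \<in> PP (f - 2*m) \<times> Pow {f-2*m<..<m} \<and> enc f m (dec f m S) = S"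
proof -
  define j where "j = f - 2*m"
  have fj: "f = 2*m + j" "j < m" "0 < j" using assms(1-3) j_def by auto
  have h: "0 \<in> S" "\<forall>a\<in>S. \<forall>b\<in>S. a + b \<in> S" "m \<in> S" "\<forall>x. 0 < x \<and> x < m \<longrightarrow> x \<notin> S"
    "f \<notin> S" "\<forall>n>f. n \<in> S" using assms(4) by (auto simp: sgp_def)
  define A where "A = {a. 0 < a \<and> a < j \<and> m + a \<in> S}"
  define B where "B = {b. 0 < b \<and> b < j \<and> 2*m + b \<in> S}"
  define C where "C = {c. j < c \<and> c < m \<and> m + c \<in> S}"
  have d: "dec f m S = ((A,B),C)" unfolding dec_def A_def B_def C_def j_def ..
  have AB: "A \<subseteq> B"
  proof
    fix a assume "a \<in> A"
    hence "m + (m + a) \<in> S" "0 < a" "a < j" using h(2,3) A_def by auto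
    thus "a \<in> B" unfolding B_def by (simp add: mult_2 add.assoc)
  qed
  have pw: "\<forall>x\<in>A. \<forall>y\<in>A. x + y \<noteq> j \<and> (x + y < j \<longrightarrow> x + y \<in> B)"
  proof (intro ballI)
    fix x y assume "x \<in> A" "y \<in> A"
    hence s: "(m + x) + (m + y) \<in> S" "0 < x" using h(2) A_def by auto
    have e: "(m + x) + (m + y) = 2*m + (x + y)" by simp
    show "x + y \<noteq> j \<and> (x + y < j \<longrightarrow> x + y \<in> B)"
      using s e h(5) fj unfolding B_def by auto
  qed
  have inD: "((A,B),C) \<in> PP j \<times> Pow {j<..<m}"
    using AB pw unfolding PP_def A_def B_def C_def by auto
  have jS: "m + j \<notin> S"
  proof
    assume "m + j \<in> S"
    hence "m + (m + j) \<in> S" using h(2,3) by auto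
    thus False using h(5) fj by (simp add: mult_2 add.assoc)
  qed
  have "enc f m ((A,B),C) = S"
  proof (intro set_eqI)
    fix x
    show "x \<in> enc f m ((A,B),C) \<longleftrightarrow> x \<in> S"
    proof (cases "x < m")
      case True thus ?thesis using h(1,4) fj by (auto simp: enc_def A_def B_def C_def)
    next
      case F1: False
      show ?thesis
      proof (cases "x < 2*m")
        case True
        then obtain a where a: "x = m + a" "a < m" using F1
          by (metis add_diff_inverse_nat mult_2 nat_add_left_cancel_less)
        show ?thesis
        proof -
          have "a = 0 \<or> (0 < a \<and> a < j) \<or> a = j \<or> (j < a \<and> a < m)" using a(2) by auto
          thus ?thesis using a h(3) jS fj by (auto simp: enc_def A_def B_def C_def)
        qed
      next
        case F2: False
        then obtain b where b: "x = 2*m + b" by (metis le_add_diff_inverse not_less)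
        have "b = 0 \<or> (0 < b \<and> b < j) \<or> b = j \<or> j < b" by auto
        moreover have "2*m \<in> S" using h(2,3) by (metis mult_2)
        ultimately show ?thesis using b h(5,6) fj
          by (auto simp: enc_def A_def B_def C_def)
      qed
    qed
  qed
  thus ?thesis using d inD j_def by simp
qed


lemma part2:
  assumes "1 \<le> m" "2*m < f" "f < 3*m"
  shows "card {S. sgp f m S} = card (PP (f - 2*m)) * 2 ^ (m - 1 - (f - 2*m))"
proof -
  let ?D = "PP (f - 2*m) \<times> Pow {f-2*m<..<m}"
  have eq: "{S. sgp f m S} = enc f m ` ?D"
  proof (intro equalityI subsetI)
    fix S assume "S \<in> {S. sgp f m S}"
    hence "dec f m S \<in> ?D \<and> enc f m (dec f m S) = S" using enc_dec assms by auto
    thus "S \<in> enc f m ` ?D" by (metis image_eqI)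
  next
    fix S assume "S \<in> enc f m ` ?D"
    then obtain p where p: "p \<in> ?D" "S = enc f m p" by blast
    obtain A B C where "p = ((A,B),C)" by (metis prod.exhaust)
    thus "S \<in> {S. sgp f m S}" using enc_sgp[OF assms] p by auto
  qed
  have inj: "inj_on (enc f m) ?D"
  proof (rule inj_on_inverseI)
    fix p assume "p \<in> ?D"
    moreover obtain A B C where "p = ((A,B),C)" by (metis prod.exhaust)
    ultimately show "dec f m (enc f m p) = p" using dec_enc[OF assms] by auto
  qed
  have "card ?D = card (PP (f - 2*m)) * 2 ^ (m - 1 - (f - 2*m))"
    by (simp add: card_cartesian_product card_Pow)
  thus ?thesis unfolding eq card_image[OF inj] .
qed

theorem proposition2p10:
  fixes f l :: nat
  assumes "f \<ge> 1" and "l \<ge> 1"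
  shows "((real f - 1) / 2 \<le> real l \<and> real l \<le> real f - 2
            \<longrightarrow> N_count 2 f l = 2 ^ (f - 2 - l))
       \<and> (\<not> ((real f - 1) / 2 \<le> real l \<and> real l \<le> real f - 2)
            \<longrightarrow> N_count 2 f l = 0)
       \<and> ((real f - 2) / 3 \<le> real l \<and> real l \<le> (real f - 3) / 2
            \<longrightarrow> N_count 3 f l = 2 ^ (l - (f - 2 - 2 * l)) * S_count (f - 2 - 2 * l))
       \<and> (\<not> ((real f - 2) / 3 \<le> real l \<and> real l \<le> (real f - 3) / 2)
            \<longrightarrow> N_count 3 f l = 0)"
proof -
  define m where "m = l + 1"
  have m1: "m \<ge> 1" using m_def by simp
  have c1: "f + 1 \<ge> 1" by simp
  have r1: "((real f - 1) / 2 \<le> real l \<and> real l \<le> real f - 2) \<longleftrightarrow> (m < f \<and> f < 2*m)"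
    unfolding m_def by (simp add: field_simps) linarith
  have r2: "((real f - 2) / 3 \<le> real l \<and> real l \<le> (real f - 3) / 2) \<longleftrightarrow> (2*m < f \<and> f < 3*m)"
    unfolding m_def by (simp add: field_simps) linarith
  have N2: "N_count 2 f l = card {S. sgp f m S \<and> m < f + 1 \<and> f + 1 \<le> 2*m}"
    using N_eq[of 2 f l] ceil_eq[OF m1 c1, of 2] m_def by simp
  have N3: "N_count 3 f l = card {S. sgp f m S \<and> 2*m < f + 1 \<and> f + 1 \<le> 3*m}"
    using N_eq[of 3 f l] ceil_eq[OF m1 c1, of 3] m_def by simp
  have ms: "m \<in> S" "f \<notin> S" "m + m \<in> S" if "sgp f m S" for S
    using that unfolding sgp_def by auto
  have A: "N_count 2 f l = (if m < f \<and> f < 2*m then 2 ^ (f - 2 - l) else 0)"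
  proof (cases "m < f \<and> f < 2*m")
    case True
    hence "{S. sgp f m S \<and> m < f + 1 \<and> f + 1 \<le> 2*m} = {S. sgp f m S}" by auto
    thus ?thesis using N2 part1[OF m1] True m_def by simp
  next
    case False
    have "{S. sgp f m S \<and> m < f + 1 \<and> f + 1 \<le> 2*m} = {}"
    proof (intro equals0I)
      fix S assume "S \<in> {S. sgp f m S \<and> m < f + 1 \<and> f + 1 \<le> 2*m}"
      hence "sgp f m S" "m < f + 1" "f + 1 \<le> 2*m" by auto
      moreover from ms[OF this(1)] have "f \<noteq> m" "f \<noteq> 2*m" by (auto simp: mult_2)
      ultimately show False using False by linarith
    qed
    hence "N_count 2 f l = 0" using N2 by (metis card.empty)
    thus ?thesis using False by (simp only: if_False)
  qed
  have B: "N_count 3 f l = (if 2*m < f \<and> f < 3*m then 2 ^ (l - (f - 2 - 2 * l)) * S_count (f - 2 - 2 * l) else 0)"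
  proof (cases "2*m < f \<and> f < 3*m")
    case True
    define j where "j = f - 2 - 2*l"
    have j: "j = f - 2*m" "j \<ge> 1" "l - j = m - 1 - (f - 2*m)" using True m_def j_def by auto
    hence "{S. sgp f m S \<and> 2*m < f + 1 \<and> f + 1 \<le> 3*m} = {S. sgp f m S}" using True by auto
    hence "N_count 3 f l = card (PP j) * 2 ^ (l - j)" using N3 part2[OF m1] True j by simp
    moreover have "S_count j = card (PP j)"
    proof -
      have "S_count j = card (PP (3*j+2 - 2*(j+1))) * 2 ^ (j + 1 - 1 - (3*j+2 - 2*(j+1)))"
        using S_eq[of j] part2[of "j+1" "3*j+2"] j(2) by simp
      also have "\<dots> = card (PP j)" by simp
      finally show ?thesis .
    qed
    ultimately show ?thesis using True j_def by simp
  next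
    case False
    have "{S. sgp f m S \<and> 2*m < f + 1 \<and> f + 1 \<le> 3*m} = {}"
    proof (intro equals0I)
      fix S assume "S \<in> {S. sgp f m S \<and> 2*m < f + 1 \<and> f + 1 \<le> 3*m}"
      hence "sgp f m S" "2*m < f + 1" "f + 1 \<le> 3*m" by auto
      moreover from ms[OF this(1)] have "f \<noteq> 2*m" by (auto simp: mult_2)
      ultimately show False using False by linarith
    qed
    hence "N_count 3 f l = 0" using N3 by (metis card.empty)
    thus ?thesis using False by (simp only: if_False)
  qed
  show ?thesis using A B r1 r2 by simp
qed

end
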